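(* Under the assumptions of the causal risk ratio identification result (binary $D,M(d),Y(d,m)$; $M=M(D)$, $Y=Y(D,M)$, $Y(d)=Y(d,M(d))$; $Y(d,0)=0$ a.s.; $D$ independent of $(M(d),Y(d,1))$ given $X=x$; $P(D=d\mid X=x)>0$, $P(M=1\mid D=d,X=x)>0$ for $d=0,1$; $\mathbb{E}[Y\mid D=0,M=1,X=x]>0$), suppose also stochastic mediator monotonicity $\mathbb{E}[M(1)\mid X=x]\ge\mathbb{E}[M(0)\mid X=x]$. Then the bias factor $$\left\{\frac{P(D=1\mid M=1,X=x)}{P(D=0\mid M=1,X=x)}\right\}\Big/\left\{\frac{P(D=1\mid X=x)}{P(D=0\mid X=x)}\right\}$$ is at least $1$, and hence $$\mathrm{CRR}(x)=\frac{\mathbb{E}[Y(1)\mid X=x]}{\mathbb{E}[Y(0)\mid X=x]}\ \ge\ \frac{\mathbb{E}[Y\mid D=1,M=1,X=x]}{\mathbb{E}[Y\mid D=0,M=1,X=x]}.$$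
   Context: $D$ is civilian race ($1$ = minority), $M$ detainment, $Y$ police use of force, $X$ covariates of a police–civilian encounter; $M(d)$ and $Y(d,m)$ are potential outcomes. Stochastic mediator monotonicity means that, on average given $X=x$, minorities are at least as likely to be detained as they would be were they of majority race. *)

theory Defs
  imports "HOL-Probability.Probability"
begin

text \<open>All quantities are taken under the conditional law given X = x, modelled as the
probability space P. Conditional probabilities P(A | B) = P(A \<inter> B) / P(B).\<close>

definition ev :: "'a measure \<Rightarrow> ('a \<Rightarrow> bool) \<Rightarrow> 'a set" where
  "ev P A = {\<omega> \<in> space P. A \<omega>}"

definition cprob :: "'a measure \<Rightarrow> ('a \<Rightarrow> bool) \<Rightarrow> ('a \<Rightarrow> bool) \<Rightarrow> real" where
  "cprob P A B = measure P (ev P (\<lambda>\<omega>. A \<omega> \<and> B \<omega>)) / measure P (ev P B)"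

end

theory Submission
  imports Defs
begin

lemma ev_split:
  assumes "prob_space P" "A \<in> P \<rightarrow>\<^sub>M count_space (UNIV::bool set)" "B \<in> P \<rightarrow>\<^sub>M count_space (UNIV::bool set)"
  shows "measure P (ev P A) = measure P (ev P (\<lambda>\<omega>. A \<omega> \<and> B \<omega>)) + measure P (ev P (\<lambda>\<omega>. A \<omega> \<and> \<not> B \<omega>))"
proof -
  interpret prob_space P by (rule assms(1))
  have e: "ev P A = ev P (\<lambda>\<omega>. A \<omega> \<and> B \<omega>) \<union> ev P (\<lambda>\<omega>. A \<omega> \<and> \<not> B \<omega>)"
    by (auto simp: ev_def)
  have "(\<lambda>\<omega>. A \<omega> \<and> B \<omega>) \<in> P \<rightarrow>\<^sub>M count_space (UNIV::bool set)" using assms(2,3) by (intro pred_intros_logic assms(2,3))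
  then have s1: "ev P (\<lambda>\<omega>. A \<omega> \<and> B \<omega>) \<in> sets P" unfolding ev_def pred_def .
  have "(\<lambda>\<omega>. A \<omega> \<and> \<not> B \<omega>) \<in> P \<rightarrow>\<^sub>M count_space (UNIV::bool set)" using assms(2,3) by (intro pred_intros_logic assms(2,3))
  then have s2: "ev P (\<lambda>\<omega>. A \<omega> \<and> \<not> B \<omega>) \<in> sets P" unfolding ev_def pred_def .
  show ?thesis unfolding e
    by (rule finite_measure_Union[OF s1 s2]) (auto simp: ev_def)
qed

lemma ev_cong: "(\<And>\<omega>. A \<omega> = B \<omega>) \<Longrightarrow> ev P A = ev P B"
  by (auto simp: ev_def)

lemma ev_null:
  assumes "prob_space P" "A \<in> P \<rightarrow>\<^sub>M count_space (UNIV::bool set)" "N \<in> P \<rightarrow>\<^sub>M count_space (UNIV::bool set)" "AE \<omega> in P. \<not> N \<omega>"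
  shows "measure P (ev P (\<lambda>\<omega>. A \<omega> \<and> N \<omega>)) = 0"
proof -
  interpret prob_space P by (rule assms(1))
  have "{\<omega> \<in> space P. N \<omega>} \<in> null_sets P"
  proof -
    have "{\<omega> \<in> space P. N \<omega>} \<in> sets P" using assms(3) by (simp add: pred_def)
    thus ?thesis using assms(4) AE_iff_null[of P "\<lambda>\<omega>. \<not> N \<omega>"] by simp
  qed
  moreover have "(\<lambda>\<omega>. A \<omega> \<and> N \<omega>) \<in> P \<rightarrow>\<^sub>M count_space (UNIV::bool set)" using assms(2,3) by (intro pred_intros_logic assms(2,3))
  then have "ev P (\<lambda>\<omega>. A \<omega> \<and> N \<omega>) \<in> sets P" unfolding ev_def pred_def .
  ultimately have "ev P (\<lambda>\<omega>. A \<omega> \<and> N \<omega>) \<in> null_sets P"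
    by (rule null_sets_subset) (auto simp: ev_def)
  thus ?thesis by (simp add: measure_eq_0_null_sets)
qed

theorem mainTheorem7:
  fixes P :: "'a measure"
    and D :: "'a \<Rightarrow> bool"
    and Mpo :: "bool \<Rightarrow> 'a \<Rightarrow> bool"
    and Ypo :: "bool \<Rightarrow> bool \<Rightarrow> 'a \<Rightarrow> bool"
    and Mobs Yobs :: "'a \<Rightarrow> bool"
  assumes prob: "prob_space P"
    and measD: "D \<in> P \<rightarrow>\<^sub>M count_space UNIV"
    and measM: "\<And>d. Mpo d \<in> P \<rightarrow>\<^sub>M count_space UNIV"
    and measY: "\<And>d m. Ypo d m \<in> P \<rightarrow>\<^sub>M count_space UNIV"
    and Mobs_def: "\<And>\<omega>. Mobs \<omega> = Mpo (D \<omega>) \<omega>"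
    and Yobs_def: "\<And>\<omega>. Yobs \<omega> = Ypo (D \<omega>) (Mobs \<omega>) \<omega>"
    and Y0: "\<And>d. AE \<omega> in P. \<not> Ypo d False \<omega>"
    and indep: "\<And>d d' a b. measure P (ev P (\<lambda>\<omega>. D \<omega> = d' \<and> Mpo d \<omega> = a \<and> Ypo d True \<omega> = b))
                   = measure P (ev P (\<lambda>\<omega>. D \<omega> = d'))
                     * measure P (ev P (\<lambda>\<omega>. Mpo d \<omega> = a \<and> Ypo d True \<omega> = b))"
    and posD: "\<And>d. measure P (ev P (\<lambda>\<omega>. D \<omega> = d)) > 0"
    and posM: "\<And>d. cprob P Mobs (\<lambda>\<omega>. D \<omega> = d) > 0"
    and posY: "cprob P Yobs (\<lambda>\<omega>. \<not> D \<omega> \<and> Mobs \<omega>) > 0"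
    and mono: "measure P (ev P (Mpo True)) \<ge> measure P (ev P (Mpo False))"
  shows "((cprob P D Mobs / cprob P (\<lambda>\<omega>. \<not> D \<omega>) Mobs)
           / (measure P (ev P D) / measure P (ev P (\<lambda>\<omega>. \<not> D \<omega>))) \<ge> 1)
         \<and> (measure P (ev P (\<lambda>\<omega>. Ypo True (Mpo True \<omega>) \<omega>))
           / measure P (ev P (\<lambda>\<omega>. Ypo False (Mpo False \<omega>) \<omega>))
         \<ge> cprob P Yobs (\<lambda>\<omega>. D \<omega> \<and> Mobs \<omega>) / cprob P Yobs (\<lambda>\<omega>. \<not> D \<omega> \<and> Mobs \<omega>))"
proof -
  interpret prob_space P by (rule prob)
  have pD[measurable]: "D \<in> P \<rightarrow>\<^sub>M count_space (UNIV::bool set)" by (rule measD)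
  have pM[measurable]: "(Mpo d) \<in> P \<rightarrow>\<^sub>M count_space (UNIV::bool set)" for d by (rule measM)
  have pY[measurable]: "(Ypo d m) \<in> P \<rightarrow>\<^sub>M count_space (UNIV::bool set)" for d m by (rule measY)
  define \<mu> where "\<mu> A = measure P (ev P A)" for A
  define p1 where "p1 = \<mu> D"
  define p0 where "p0 = \<mu> (\<lambda>\<omega>. \<not> D \<omega>)"
  define m1 where "m1 = \<mu> (Mpo True)"
  define m0 where "m0 = \<mu> (Mpo False)"
  define q1 where "q1 = \<mu> (\<lambda>\<omega>. Mpo True \<omega> \<and> Ypo True True \<omega>)"
  define q0 where "q0 = \<mu> (\<lambda>\<omega>. Mpo False \<omega> \<and> Ypo False True \<omega>)"
  have p1pos: "p1 > 0" using posD[of True] by (simp add: p1_def \<mu>_def)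
  have p0pos: "p0 > 0" using posD[of False] by (simp add: p0_def \<mu>_def)
  have jointY: "\<mu> (\<lambda>\<omega>. D \<omega> = d' \<and> Mpo d \<omega> = a \<and> Ypo d True \<omega>)
      = \<mu> (\<lambda>\<omega>. D \<omega> = d') * \<mu> (\<lambda>\<omega>. Mpo d \<omega> = a \<and> Ypo d True \<omega>)" for d d' a
    using indep[of d' d a True] by (simp add: \<mu>_def)
  have jointM: "\<mu> (\<lambda>\<omega>. D \<omega> = d' \<and> Mpo d \<omega> = a)
      = \<mu> (\<lambda>\<omega>. D \<omega> = d') * \<mu> (\<lambda>\<omega>. Mpo d \<omega> = a)" for d d' a
  proof -
    have "\<mu> (\<lambda>\<omega>. D \<omega> = d' \<and> Mpo d \<omega> = a) =
       \<mu> (\<lambda>\<omega>. D \<omega> = d' \<and> Mpo d \<omega> = a \<and> Ypo d True \<omega> = True)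
       + \<mu> (\<lambda>\<omega>. D \<omega> = d' \<and> Mpo d \<omega> = a \<and> Ypo d True \<omega> = False)"
      unfolding \<mu>_def by (subst ev_split[OF prob _ pY[of d True]]) (auto simp: conj_assoc)
    also have "\<dots> = \<mu> (\<lambda>\<omega>. D \<omega> = d') * (\<mu> (\<lambda>\<omega>. Mpo d \<omega> = a \<and> Ypo d True \<omega> = True)
       + \<mu> (\<lambda>\<omega>. Mpo d \<omega> = a \<and> Ypo d True \<omega> = False))"
      unfolding \<mu>_def indep by (simp add: distrib_left)
    also have "\<mu> (\<lambda>\<omega>. Mpo d \<omega> = a \<and> Ypo d True \<omega> = True)
       + \<mu> (\<lambda>\<omega>. Mpo d \<omega> = a \<and> Ypo d True \<omega> = False) = \<mu> (\<lambda>\<omega>. Mpo d \<omega> = a)"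
      unfolding \<mu>_def by (subst ev_split[OF prob _ pY[of d True], of "\<lambda>\<omega>. Mpo d \<omega> = a"]) auto
    finally show ?thesis .
  qed
  have DM1: "\<mu> (\<lambda>\<omega>. D \<omega> \<and> Mpo True \<omega>) = p1 * m1"
    using jointM[of True True True] by (simp add: p1_def m1_def)
  have DM0: "\<mu> (\<lambda>\<omega>. \<not> D \<omega> \<and> Mpo False \<omega>) = p0 * m0"
    using jointM[of False False True] by (simp add: p0_def m0_def)
  have DMY1: "\<mu> (\<lambda>\<omega>. D \<omega> \<and> Mpo True \<omega> \<and> Ypo True True \<omega>) = p1 * q1"
    using jointY[of True True True] by (simp add: p1_def q1_def)
  have DMY0: "\<mu> (\<lambda>\<omega>. \<not> D \<omega> \<and> Mpo False \<omega> \<and> Ypo False True \<omega>) = p0 * q0"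
    using jointY[of False False True] by (simp add: p0_def q0_def)
  define S where "S = \<mu> Mobs"
  have pMobs[measurable]: "Mobs \<in> P \<rightarrow>\<^sub>M count_space (UNIV::bool set)"
  proof -
    have "Mobs = (\<lambda>\<omega>. (D \<omega> \<and> Mpo True \<omega>) \<or> (\<not> D \<omega> \<and> Mpo False \<omega>))"
      by (rule ext, rename_tac \<omega>, case_tac "D \<omega>") (simp_all add: Mobs_def)
    then show ?thesis by (simp only:) measurable
  qed
  have pYobs[measurable]: "Yobs \<in> P \<rightarrow>\<^sub>M count_space (UNIV::bool set)"
  proof -
    have "Yobs = (\<lambda>\<omega>. (D \<omega> \<and> Mobs \<omega> \<and> Ypo True True \<omega>) \<or> (D \<omega> \<and> \<not> Mobs \<omega> \<and> Ypo True False \<omega>)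
       \<or> (\<not> D \<omega> \<and> Mobs \<omega> \<and> Ypo False True \<omega>) \<or> (\<not> D \<omega> \<and> \<not> Mobs \<omega> \<and> Ypo False False \<omega>))"
      by (rule ext, rename_tac \<omega>, case_tac "D \<omega>"; case_tac "Mobs \<omega>") (simp_all add: Yobs_def)
    then show ?thesis by (simp only:) measurable
  qed
  have S_eq: "S = p1 * m1 + p0 * m0"
  proof -
    have "S = \<mu> (\<lambda>\<omega>. Mobs \<omega> \<and> D \<omega>) + \<mu> (\<lambda>\<omega>. Mobs \<omega> \<and> \<not> D \<omega>)"
      unfolding S_def \<mu>_def by (rule ev_split[OF prob pMobs pD])
    also have "\<mu> (\<lambda>\<omega>. Mobs \<omega> \<and> D \<omega>) = \<mu> (\<lambda>\<omega>. D \<omega> \<and> Mpo True \<omega>)"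
      unfolding \<mu>_def by (rule arg_cong[where f="measure P"], rule ev_cong) (auto simp: Mobs_def)
    also have "\<mu> (\<lambda>\<omega>. Mobs \<omega> \<and> \<not> D \<omega>) = \<mu> (\<lambda>\<omega>. \<not> D \<omega> \<and> Mpo False \<omega>)"
      unfolding \<mu>_def by (rule arg_cong[where f="measure P"], rule ev_cong) (auto simp: Mobs_def)
    finally show ?thesis using DM1 DM0 by simp
  qed
  have m0pos: "m0 > 0"
  proof -
    have "ev P (\<lambda>\<omega>. Mobs \<omega> \<and> \<not> D \<omega>) = ev P (\<lambda>\<omega>. \<not> D \<omega> \<and> Mpo False \<omega>)"
      by (rule ev_cong) (auto simp: Mobs_def)
    thus ?thesis using posM[of False] DM0 p0pos
      by (simp add: cprob_def \<mu>_def p0_def[unfolded \<mu>_def, symmetric])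
  qed
  have m1ge: "m1 \<ge> m0" using mono by (simp add: m1_def m0_def \<mu>_def)
  have Spos: "S > 0" using S_eq p1pos p0pos m0pos m1ge
    by (smt (verit) mult_pos_pos)
  have c1: "cprob P D Mobs = p1 * m1 / S"
  proof -
    have "ev P (\<lambda>\<omega>. D \<omega> \<and> Mobs \<omega>) = ev P (\<lambda>\<omega>. D \<omega> \<and> Mpo True \<omega>)"
      by (rule ev_cong) (auto simp: Mobs_def)
    thus ?thesis using DM1 by (simp add: cprob_def \<mu>_def S_def)
  qed
  have c0: "cprob P (\<lambda>\<omega>. \<not> D \<omega>) Mobs = p0 * m0 / S"
  proof -
    have "ev P (\<lambda>\<omega>. \<not> D \<omega> \<and> Mobs \<omega>) = ev P (\<lambda>\<omega>. \<not> D \<omega> \<and> Mpo False \<omega>)"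
      by (rule ev_cong) (auto simp: Mobs_def)
    thus ?thesis using DM0 by (simp add: cprob_def \<mu>_def S_def)
  qed
  have y1: "cprob P Yobs (\<lambda>\<omega>. D \<omega> \<and> Mobs \<omega>) = q1 / m1"
  proof -
    have "ev P (\<lambda>\<omega>. Yobs \<omega> \<and> D \<omega> \<and> Mobs \<omega>) = ev P (\<lambda>\<omega>. D \<omega> \<and> Mpo True \<omega> \<and> Ypo True True \<omega>)"
      by (rule ev_cong) (auto simp: Mobs_def Yobs_def)
    moreover have "ev P (\<lambda>\<omega>. D \<omega> \<and> Mobs \<omega>) = ev P (\<lambda>\<omega>. D \<omega> \<and> Mpo True \<omega>)"
      by (rule ev_cong) (auto simp: Mobs_def)
    ultimately show ?thesis using DMY1 DM1 p1pos by (simp add: cprob_def \<mu>_def)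
  qed
  have y0: "cprob P Yobs (\<lambda>\<omega>. \<not> D \<omega> \<and> Mobs \<omega>) = q0 / m0"
  proof -
    have "ev P (\<lambda>\<omega>. Yobs \<omega> \<and> \<not> D \<omega> \<and> Mobs \<omega>) = ev P (\<lambda>\<omega>. \<not> D \<omega> \<and> Mpo False \<omega> \<and> Ypo False True \<omega>)"
      by (rule ev_cong) (auto simp: Mobs_def Yobs_def)
    moreover have "ev P (\<lambda>\<omega>. \<not> D \<omega> \<and> Mobs \<omega>) = ev P (\<lambda>\<omega>. \<not> D \<omega> \<and> Mpo False \<omega>)"
      by (rule ev_cong) (auto simp: Mobs_def)
    ultimately show ?thesis using DMY0 DM0 p0pos by (simp add: cprob_def \<mu>_def)
  qed
  have EY: "\<mu> (\<lambda>\<omega>. Ypo d (Mpo d \<omega>) \<omega>) = \<mu> (\<lambda>\<omega>. Mpo d \<omega> \<and> Ypo d True \<omega>)" for d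
  proof -
    have pp[measurable]: "(\<lambda>\<omega>. Ypo d (Mpo d \<omega>) \<omega>) \<in> P \<rightarrow>\<^sub>M count_space (UNIV::bool set)"
    proof -
      have "(\<lambda>\<omega>. Ypo d (Mpo d \<omega>) \<omega>) = (\<lambda>\<omega>. (Mpo d \<omega> \<and> Ypo d True \<omega>) \<or> (\<not> Mpo d \<omega> \<and> Ypo d False \<omega>))"
        by (rule ext, rename_tac \<omega>, case_tac "Mpo d \<omega>") simp_all
      then show ?thesis by (simp only:) measurable
    qed
    have "\<mu> (\<lambda>\<omega>. Ypo d (Mpo d \<omega>) \<omega>) = \<mu> (\<lambda>\<omega>. Ypo d (Mpo d \<omega>) \<omega> \<and> Mpo d \<omega>) + \<mu> (\<lambda>\<omega>. Ypo d (Mpo d \<omega>) \<omega> \<and> \<not> Mpo d \<omega>)"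
      unfolding \<mu>_def by (rule ev_split[OF prob pp pM])
    also have "\<mu> (\<lambda>\<omega>. Ypo d (Mpo d \<omega>) \<omega> \<and> \<not> Mpo d \<omega>) = \<mu> (\<lambda>\<omega>. \<not> Mpo d \<omega> \<and> Ypo d False \<omega>)"
      unfolding \<mu>_def by (rule arg_cong[where f="measure P"], rule ev_cong) auto
    also have "\<dots> = 0" unfolding \<mu>_def
      by (rule ev_null[OF prob _ pY Y0]) simp
    also have "\<mu> (\<lambda>\<omega>. Ypo d (Mpo d \<omega>) \<omega> \<and> Mpo d \<omega>) = \<mu> (\<lambda>\<omega>. Mpo d \<omega> \<and> Ypo d True \<omega>)"
      unfolding \<mu>_def by (rule arg_cong[where f="measure P"], rule ev_cong) auto
    finally show ?thesis by simp
  qed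
  have q0pos: "q0 > 0" using posY y0 m0pos by (simp add: divide_pos_pos zero_less_divide_iff)
  have q1nn: "q1 \<ge> 0" by (simp add: q1_def \<mu>_def)
  have m1pos: "m1 > 0" using m0pos m1ge by simp
  have g1: "(p1 * m1 / S / (p0 * m0 / S)) / (p1 / p0) \<ge> 1"
    using p1pos p0pos m0pos m1ge Spos by (simp add: field_simps)
  have g2: "q1 / q0 \<ge> q1 / m1 / (q0 / m0)"
  proof -
    have "q1 / m1 / (q0 / m0) = (q1 / q0) * (m0 / m1)" using q0pos m0pos m1pos by (simp add: field_simps)
    also have "\<dots> \<le> (q1 / q0) * 1"
      using q0pos q1nn m0pos m1ge m1pos by (intro mult_left_mono) (auto simp: divide_le_eq)
    finally show ?thesis by simp
  qed
  show ?thesis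
    using g1 g2 EY[of True] EY[of False]
    unfolding c1 c0 y1 y0
    by (simp add: p1_def p0_def q1_def q0_def \<mu>_def)
qed

end
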